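(* Let $K$ be as in the context with $T_K$ universally $L^p$-improving. Let $G$ be a connected tree on vertices $1,\dots,n$ ($n\ge2$), labelled so that, when $G$ is rooted at vertex $1$, every vertex has a smaller label than each of its children. For nonnegative measurable $f_2,\dots,f_n$ define $$U(x^1)=\int_{(\mathbb R^d)^{n-1}}\prod_{\{i,j\}\in E,\ i<j}K(x^i,x^j)\prod_{i=2}^n f_i(x^i)\,dx^2\cdots dx^n,$$ so that $\Lambda^K_G(f_1,\dots,f_n)=\int U(x^1)f_1(x^1)\,dx^1$. Then for every $q\ge1$ there exist $p_1,\dots,p_n\in(1,\infty)$ with $\sum_{i=1}^n\frac1{p_i}>\frac1q$ and a constant $C$ such that $$\|U\cdot f_1\|_{L^q(\mathbb R^d)}\le C\prod_{i=1}^n\|f_i\|_{L^{p_i}(\mathbb R^d)}$$ for all nonnegative measurable $f_1,\dots,f_n$.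
   Context: $K:\mathbb R^d\times\mathbb R^d\to[0,\infty)$ is a nonnegative locally integrable function, $T_Kf(x)=\int_{\mathbb R^d}K(x,y)f(y)\,dy$, and $E$ is the edge set of $G$. $T_K$ is called universally $L^p$-improving if for every $q\in(1,\infty)$ there exist $p\in(1,q)$ and $C$ with $\|T_Kf\|_{L^q(\mathbb R^d)}\le C\|f\|_{L^p(\mathbb R^d)}$ for all $f$. *)

theory Defs
  imports "HOL-Analysis.Analysis"
begin

text \<open>Real powers of extended nonnegative reals (used with positive exponents only):
  \<open>\<infinity> ^ a = \<infinity>\<close>, otherwise the usual real power.\<close>
definition ennpow :: "ennreal \<Rightarrow> real \<Rightarrow> ennreal" where
  "ennpow x a = (if x = top then top else ennreal (enn2real x powr a))"

definition Lp_norm :: "real \<Rightarrow> ('a::euclidean_space \<Rightarrow> ennreal) \<Rightarrow> ennreal" where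
  "Lp_norm p g = ennpow (\<integral>\<^sup>+ x. ennpow (g x) p \<partial>lborel) (1 / p)"

definition T_op :: "('a::euclidean_space \<Rightarrow> 'a \<Rightarrow> real) \<Rightarrow> ('a \<Rightarrow> real) \<Rightarrow> 'a \<Rightarrow> ennreal" where
  "T_op K f x = (\<integral>\<^sup>+ y. ennreal (K x y * f y) \<partial>lborel)"

definition univ_Lp_improving :: "('a::euclidean_space \<Rightarrow> 'a \<Rightarrow> real) \<Rightarrow> bool" where
  "univ_Lp_improving K \<longleftrightarrow>
     (\<forall>q::real. q > 1 \<longrightarrow> (\<exists>p C::real. 1 < p \<and> p < q \<and>
        (\<forall>f. f \<in> borel_measurable lborel \<longrightarrow> (\<forall>x. 0 \<le> f x) \<longrightarrow>
           Lp_norm q (T_op K f) \<le> ennreal C * Lp_norm p (\<lambda>x. ennreal (f x)))))"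

definition locally_integrable_kernel :: "('a::euclidean_space \<Rightarrow> 'a \<Rightarrow> real) \<Rightarrow> bool" where
  "locally_integrable_kernel K \<longleftrightarrow>
     (\<forall>S :: ('a \<times> 'a) set. compact S \<longrightarrow> set_integrable lborel S (\<lambda>(x, y). K x y))"

definition simple_graph_on :: "nat \<Rightarrow> nat set set \<Rightarrow> bool" where
  "simple_graph_on n E \<longleftrightarrow> (\<forall>e\<in>E. e \<subseteq> {1..n} \<and> card e = 2)"

definition is_walk :: "nat set set \<Rightarrow> nat list \<Rightarrow> bool" where
  "is_walk E ps \<longleftrightarrow> ps \<noteq> [] \<and> (\<forall>i. Suc i < length ps \<longrightarrow> {ps ! i, ps ! Suc i} \<in> E)"

definition is_path :: "nat set set \<Rightarrow> nat list \<Rightarrow> bool" where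
  "is_path E ps \<longleftrightarrow> is_walk E ps \<and> distinct ps"

definition is_cycle :: "nat set set \<Rightarrow> nat list \<Rightarrow> bool" where
  "is_cycle E ps \<longleftrightarrow> is_path E ps \<and> length ps \<ge> 3 \<and> {last ps, hd ps} \<in> E"

definition connected_graph :: "nat \<Rightarrow> nat set set \<Rightarrow> bool" where
  "connected_graph n E \<longleftrightarrow>
     (\<forall>u\<in>{1..n}. \<forall>v\<in>{1..n}. \<exists>ps. is_path E ps \<and> hd ps = u \<and> last ps = v)"

definition is_tree :: "nat \<Rightarrow> nat set set \<Rightarrow> bool" where
  "is_tree n E \<longleftrightarrow> simple_graph_on n E \<and> connected_graph n E \<and> (\<nexists>ps. is_cycle E ps)"

definition rooted_child :: "nat set set \<Rightarrow> nat \<Rightarrow> nat \<Rightarrow> bool" where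
  "rooted_child E v w \<longleftrightarrow> (\<exists>ps. is_path E (ps @ [v, w]) \<and> hd (ps @ [v, w]) = 1)"

definition U_fun :: "nat \<Rightarrow> nat set set \<Rightarrow> ('a::euclidean_space \<Rightarrow> 'a \<Rightarrow> real)
     \<Rightarrow> (nat \<Rightarrow> 'a \<Rightarrow> real) \<Rightarrow> 'a \<Rightarrow> ennreal" where
  "U_fun n E K f x1 =
     (\<integral>\<^sup>+ y. (let z = y(1 := x1) in
          (\<Prod>(i, j)\<in>{(i, j). i < j \<and> {i, j} \<in> E}. ennreal (K (z i) (z j)))
          * (\<Prod>i\<in>{2..n}. ennreal (f i (z i))))
        \<partial>(PiM {2..n} (\<lambda>_. lborel)))"

end

theory Submission
  imports Defs
begin

lemma ennpow_ennreal: "0 \<le> x \<Longrightarrow> ennpow (ennreal x) a = ennreal (x powr a)"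
  by (simp add: ennpow_def)
lemma ennpow_top[simp]: "ennpow top a = top"
  by (simp add: ennpow_def)
lemma ennpow_zero[simp]: "ennpow 0 a = 0"
  by (simp add: ennpow_def)

lemma ennpow_mono:
  assumes "0 < a" "x \<le> y" shows "ennpow x a \<le> ennpow y a"
proof (cases "y = top")
  case True then show ?thesis by simp
next
  case False
  then have "x \<noteq> top" using assms(2) top.extremum_unique by fastforce
  then show ?thesis using False assms
    by (auto simp: ennpow_def less_top intro!: ennreal_leI powr_mono2 enn2real_mono)
qed

lemma ennpow_eq_top_iff[simp]: "ennpow x a = top \<longleftrightarrow> x = top"
  by (simp add: ennpow_def)

lemma ennpow_eq_0_iff: "ennpow x a = 0 \<longleftrightarrow> x = 0"
  by (cases x) (auto simp: ennpow_def ennreal_eq_0_iff)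

lemma ennpow_mult:
  assumes "0 < a" shows "ennpow (x * y) a = ennpow x a * ennpow y a"
proof (cases "x = 0 \<or> y = 0")
  case True then show ?thesis by auto
next
  case False
  show ?thesis
  proof (cases "x = top \<or> y = top")
    case True
    then show ?thesis using False
      by (auto simp: ennreal_mult_eq_top_iff ennpow_eq_0_iff)
  next
    case F2: False
    then obtain u v where "x = ennreal u" "y = ennreal v" "0 \<le> u" "0 \<le> v"
      by (metis ennreal_cases top_ennreal.rep_eq less_eq_ennreal.rep_eq enn2real_nonneg ennreal_enn2real_if)
    then show ?thesis
      by (simp add: ennpow_ennreal ennreal_mult[symmetric] powr_mult)
  qed
qed

lemma ennpow_ennpow:
  assumes "0 < a" "0 < b" shows "ennpow (ennpow x a) b = ennpow x (a * b)"
  by (cases x) (auto simp: ennpow_def powr_powr)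

lemma ennpow_1[simp]: "ennpow x 1 = x"
  by (cases x) (auto simp: ennpow_def)

lemma ennpow_2: "ennpow x 2 = x ^ 2"
  by (cases x) (auto simp: ennpow_def ennreal_power)

lemma borel_ennpow[measurable]: "(\<lambda>x. ennpow x a) \<in> borel_measurable (borel :: ennreal measure)"
  unfolding ennpow_def by measurable

lemma borel_ennpow'[measurable]:
  "f \<in> borel_measurable M \<Longrightarrow> (\<lambda>x. ennpow (f x) a) \<in> borel_measurable M"
  using measurable_compose[OF _ borel_ennpow] by blast

lemma young2_ennreal:
  fixes a b :: real assumes "0 < a" "0 < b"
  shows "(u::ennreal) * v \<le> ennreal (b / (2*a)) * u^2 + ennreal (a / (2*b)) * v^2"
proof (cases "u = top \<or> v = top")
  case True
  show ?thesis
  proof (cases "u = 0 \<or> v = 0")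
    case True then show ?thesis by auto
  next
    case False
    then have "u^2 \<noteq> 0" "v^2 \<noteq> 0" by auto
    have c: "ennreal (b / (2*a)) * top = top" "ennreal (a / (2*b)) * top = top"
      using assms by (auto intro!: ennreal_mult_top)
    from True show ?thesis
    proof
      assume "u = top"
      then have "ennreal (b / (2*a)) * u^2 = top" using c by (simp add: power2_eq_square)
      then show ?thesis by simp
    next
      assume "v = top"
      then have "ennreal (a / (2*b)) * v^2 = top" using c by (simp add: power2_eq_square)
      then show ?thesis by simp
    qed
  qed
next
  case False
  then obtain x y where xy: "u = ennreal x" "v = ennreal y" "0 \<le> x" "0 \<le> y"
    by (metis enn2real_nonneg ennreal_enn2real_if)
  have "0 \<le> (b*x - a*y)^2" by simp
  then have "2*a*b*(x*y) \<le> b^2*x^2 + a^2*y^2" by (simp add: power2_eq_square algebra_simps)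
  then have "x*y \<le> (b/(2*a))*x^2 + (a/(2*b))*y^2"
    using assms by (simp add: field_simps power2_eq_square)
  then have le: "ennreal (x*y) \<le> ennreal ((b/(2*a))*x^2 + (a/(2*b))*y^2)" by (rule ennreal_leI)
  have c1: "0 \<le> b/(2*a)" "0 \<le> a/(2*b)" using assms by auto
  have e1: "u * v = ennreal (x*y)" using xy by (simp add: ennreal_mult)
  have u2: "u^2 = ennreal (x^2)" "v^2 = ennreal (y^2)" using xy by (simp_all add: ennreal_power)
  have e2: "ennreal (b / (2*a)) * u^2 = ennreal ((b/(2*a))*x^2)"
    unfolding u2 using c1 by (intro ennreal_mult[symmetric]) auto
  have e3: "ennreal (a / (2*b)) * v^2 = ennreal ((a/(2*b))*y^2)"
    unfolding u2 using c1 by (intro ennreal_mult[symmetric]) auto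
  have e4: "ennreal ((b/(2*a))*x^2 + (a/(2*b))*y^2) = ennreal ((b/(2*a))*x^2) + ennreal ((a/(2*b))*y^2)"
    using c1 by (intro ennreal_plus mult_nonneg_nonneg) auto
  show ?thesis unfolding e1 e2 e3 e4[symmetric] by (rule le)
qed

lemma cauchy_schwarz_nn:
  assumes G: "G \<in> borel_measurable M" and H: "H \<in> borel_measurable M"
  shows "(\<integral>\<^sup>+x. G x * H x \<partial>M) \<le> ennpow (\<integral>\<^sup>+x. (G x)^2 \<partial>M) (1/2) * ennpow (\<integral>\<^sup>+x. (H x)^2 \<partial>M) (1/2)"
proof -
  define A where "A = (\<integral>\<^sup>+x. (G x)^2 \<partial>M)"
  define B where "B = (\<integral>\<^sup>+x. (H x)^2 \<partial>M)"
  show ?thesis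
  proof (cases "A = 0 \<or> B = 0")
    case True
    have "(\<integral>\<^sup>+x. G x * H x \<partial>M) = 0"
    proof (cases "A = 0")
      case True
      then have "AE x in M. (G x)^2 = 0" unfolding A_def
        by (subst (asm) nn_integral_0_iff_AE) (use G in auto)
      then have "AE x in M. G x * H x = 0" by eventually_elim auto
      then show ?thesis by (subst nn_integral_0_iff_AE) (use G H in auto)
    next
      case False
      then have "B = 0" using \<open>A = 0 \<or> B = 0\<close> by auto
      then have "AE x in M. (H x)^2 = 0" unfolding B_def
        by (subst (asm) nn_integral_0_iff_AE) (use H in auto)
      then have "AE x in M. G x * H x = 0" by eventually_elim auto
      then show ?thesis by (subst nn_integral_0_iff_AE) (use G H in auto)
    qed
    then show ?thesis by simp
  next
    case F0: False
    show ?thesis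
    proof (cases "A = top \<or> B = top")
      case True
      then have "ennpow A (1/2) * ennpow B (1/2) = top"
        using F0 by (auto simp: ennreal_mult_eq_top_iff ennpow_eq_0_iff)
      then show ?thesis unfolding A_def B_def by simp
    next
      case False
      define a where "a = enn2real A powr (1/2)"
      define b where "b = enn2real B powr (1/2)"
      have Ar: "A = ennreal (enn2real A)" "B = ennreal (enn2real B)"
        using False by (auto simp: ennreal_enn2real_if)
      have Apos: "enn2real A > 0" "enn2real B > 0"
        using F0 False by (auto simp: enn2real_positive_iff less_top zero_less_iff_neq_zero)
      have a: "0 < a" "0 < b" using Apos by (auto simp: a_def b_def)
      have a2: "a^2 = enn2real A" "b^2 = enn2real B"
      proof -
        have "a^2 = a powr 2" using a(1) by (simp add: powr_numeral)
        also have "\<dots> = enn2real A" using Apos by (simp add: a_def powr_powr)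
        finally show "a^2 = enn2real A" .
        have "b^2 = b powr 2" using a(2) by (simp add: powr_numeral)
        also have "\<dots> = enn2real B" using Apos by (simp add: b_def powr_powr)
        finally show "b^2 = enn2real B" .
      qed
      have A': "A = ennreal (a^2)" "B = ennreal (b^2)" by (metis Ar(1) a2(1), metis Ar(2) a2(2))
      have "(\<integral>\<^sup>+x. G x * H x \<partial>M) \<le> (\<integral>\<^sup>+x. ennreal (b / (2*a)) * (G x)^2 + ennreal (a / (2*b)) * (H x)^2 \<partial>M)"
        by (intro nn_integral_mono young2_ennreal a)
      also have "\<dots> = ennreal (b / (2*a)) * A + ennreal (a / (2*b)) * B"
        unfolding A_def B_def using G H
        by (simp add: nn_integral_add nn_integral_cmult)
      also have "\<dots> = ennreal (b / (2*a) * a^2) + ennreal (a / (2*b) * b^2)"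
      proof -
        have "ennreal (b / (2*a)) * ennreal (a^2) = ennreal (b / (2*a) * a^2)"
          using a by (intro ennreal_mult[symmetric]) auto
        moreover have "ennreal (a / (2*b)) * ennreal (b^2) = ennreal (a / (2*b) * b^2)"
          using a by (intro ennreal_mult[symmetric]) auto
        ultimately show ?thesis unfolding A' by simp
      qed
      also have "\<dots> = ennreal (b / (2*a) * a^2 + a / (2*b) * b^2)"
        by (rule ennreal_plus[symmetric]) (use a in auto)
      also have "\<dots> = ennreal (a * b)"
        using a by (simp add: field_simps power2_eq_square)
      also have "\<dots> = ennpow A (1/2) * ennpow B (1/2)"
        using False a by (simp add: ennpow_def a_def b_def ennreal_mult)
      finally show ?thesis unfolding A_def B_def .
    qed
  qed
qed

lemma holder_Lp:
  fixes g h :: "'a::euclidean_space \<Rightarrow> ennreal"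
  assumes g: "g \<in> borel_measurable lborel" and h: "h \<in> borel_measurable lborel" and r: "0 < r"
  shows "Lp_norm r (\<lambda>x. g x * h x) \<le> Lp_norm (2*r) g * Lp_norm (2*r) h"
proof -
  have "(\<integral>\<^sup>+x. ennpow (g x * h x) r \<partial>lborel) = (\<integral>\<^sup>+x. ennpow (g x) r * ennpow (h x) r \<partial>lborel)"
    using r by (simp add: ennpow_mult)
  also have "\<dots> \<le> ennpow (\<integral>\<^sup>+x. (ennpow (g x) r)^2 \<partial>lborel) (1/2) * ennpow (\<integral>\<^sup>+x. (ennpow (h x) r)^2 \<partial>lborel) (1/2)"
    by (rule cauchy_schwarz_nn) (use g h in measurable)
  also have "\<dots> = ennpow (\<integral>\<^sup>+x. ennpow (g x) (2*r) \<partial>lborel) (1/2) * ennpow (\<integral>\<^sup>+x. ennpow (h x) (2*r) \<partial>lborel) (1/2)"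
    using r by (simp add: ennpow_2[symmetric] ennpow_ennpow mult.commute)
  finally have *: "(\<integral>\<^sup>+x. ennpow (g x * h x) r \<partial>lborel) \<le> \<dots>" .
  have "Lp_norm r (\<lambda>x. g x * h x) \<le> ennpow (ennpow (\<integral>\<^sup>+x. ennpow (g x) (2*r) \<partial>lborel) (1/2) * ennpow (\<integral>\<^sup>+x. ennpow (h x) (2*r) \<partial>lborel) (1/2)) (1/r)"
    unfolding Lp_norm_def using r by (intro ennpow_mono *) auto
  also have "\<dots> = Lp_norm (2*r) g * Lp_norm (2*r) h"
    unfolding Lp_norm_def using r by (simp add: ennpow_mult ennpow_ennpow)
  finally show ?thesis .
qed

lemma K_trunc_meas:
  fixes K :: "'a::euclidean_space \<Rightarrow> 'a \<Rightarrow> real"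
  assumes "locally_integrable_kernel K"
  shows "(\<lambda>z. indicator (cball 0 (real k)) z *\<^sub>R (case z of (x, y) \<Rightarrow> K x y)) \<in> borel_measurable (lborel :: ('a \<times> 'a) measure)"
proof -
    have c: "compact (cball (0::'a\<times>'a) (real k))" by (rule compact_cball)
    have "set_integrable lborel (cball (0::'a\<times>'a) (real k)) (\<lambda>z. case z of (x, y) \<Rightarrow> K x y)"
      using assms c unfolding locally_integrable_kernel_def by blast
    then have "integrable lborel (\<lambda>z. indicator (cball (0::'a\<times>'a) (real k)) z *\<^sub>R (case z of (x, y) \<Rightarrow> K x y))"
      unfolding set_integrable_def .
    then show ?thesis by (rule borel_measurable_integrable)
qed

lemma K_trunc_lim:
  fixes K :: "'a::euclidean_space \<Rightarrow> 'a \<Rightarrow> real" and z :: "'a \<times> 'a"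
  shows "(\<lambda>k::nat. indicator (cball 0 (real k)) z *\<^sub>R (case z of (x, y) \<Rightarrow> K x y)) \<longlonglongrightarrow> (case z of (x, y) \<Rightarrow> K x y)"
proof -
    obtain N :: nat where N: "norm z \<le> real N" using real_arch_simple by blast
    have "eventually (\<lambda>k. indicator (cball 0 (real k)) z *\<^sub>R (case z of (x, y) \<Rightarrow> K x y) = (case z of (x, y) \<Rightarrow> K x y)) sequentially"
      unfolding eventually_sequentially
    proof (intro exI allI impI)
      fix k assume "N \<le> k"
      then have "z \<in> cball 0 (real k)" using N by (auto simp: dist_norm)
      then show "indicator (cball 0 (real k)) z *\<^sub>R (case z of (x, y) \<Rightarrow> K x y) = (case z of (x, y) \<Rightarrow> K x y)" by simp
    qed
    then show ?thesis
      by (rule tendsto_eventually)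
qed

lemma K_meas_lborel:
  fixes K :: "'a::euclidean_space \<Rightarrow> 'a \<Rightarrow> real"
  assumes "locally_integrable_kernel K"
  shows "(\<lambda>z. case z of (x, y) \<Rightarrow> K x y) \<in> borel_measurable (lborel :: ('a \<times> 'a) measure)"
  by (rule borel_measurable_LIMSEQ_metric[where f="\<lambda>k z. indicator (cball 0 (real k)) z *\<^sub>R (case z of (x, y) \<Rightarrow> K x y)",
        OF K_trunc_meas[OF assms] K_trunc_lim])

lemma K_meas_pair:
  fixes K :: "'a::euclidean_space \<Rightarrow> 'a \<Rightarrow> real"
  assumes "locally_integrable_kernel K"
  shows "(\<lambda>z. case z of (x, y) \<Rightarrow> K x y) \<in> borel_measurable (lborel \<Otimes>\<^sub>M lborel)"
  unfolding lborel_prod by (rule K_meas_lborel[OF assms])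

definition Tg :: "('a::euclidean_space \<Rightarrow> 'a \<Rightarrow> real) \<Rightarrow> ('a \<Rightarrow> ennreal) \<Rightarrow> 'a \<Rightarrow> ennreal" where
  "Tg K g x = (\<integral>\<^sup>+ y. ennreal (K x y) * g y \<partial>lborel)"

lemma Tg_meas:
  fixes K :: "'a::euclidean_space \<Rightarrow> 'a \<Rightarrow> real"
  assumes Km: "(\<lambda>z. case z of (x, y) \<Rightarrow> K x y) \<in> borel_measurable (lborel \<Otimes>\<^sub>M lborel)"
    and g: "g \<in> borel_measurable lborel"
  shows "Tg K g \<in> borel_measurable lborel"
proof -
  have "(\<lambda>z. ennreal (K (fst z) (snd z)) * g (snd z)) \<in> borel_measurable (lborel \<Otimes>\<^sub>M lborel)"
  proof -
    have "(\<lambda>z. K (fst z) (snd z)) \<in> borel_measurable (lborel \<Otimes>\<^sub>M lborel)"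
      using Km by (simp add: case_prod_beta')
    then show ?thesis using g by measurable
  qed
  then show ?thesis unfolding Tg_def
    by (intro lborel.borel_measurable_nn_integral) (simp add: case_prod_beta')
qed

lemma T_bound:
  fixes K :: "'a::euclidean_space \<Rightarrow> 'a \<Rightarrow> real"
  assumes imp: "univ_Lp_improving K" and s: "1 < s" and Kn: "\<forall>x y. 0 \<le> K x y"
  shows "\<exists>t C. 1 < t \<and> t < s \<and> 0 < C \<and>
     (\<forall>g. g \<in> borel_measurable lborel \<longrightarrow> Lp_norm s (Tg K g) \<le> ennreal C * Lp_norm t g)"
proof -
  have "\<exists>p C::real. 1 < p \<and> p < s \<and> (\<forall>f. f \<in> borel_measurable lborel \<longrightarrow> (\<forall>x. 0 \<le> f x) \<longrightarrow>
           Lp_norm s (T_op K f) \<le> ennreal C * Lp_norm p (\<lambda>x. ennreal (f x)))"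
    using imp s unfolding univ_Lp_improving_def by simp
  then obtain t C0 where t: "1 < t" "t < s" and C0': "\<forall>f. f \<in> borel_measurable lborel \<longrightarrow> (\<forall>x. 0 \<le> f x) \<longrightarrow>
           Lp_norm s (T_op K f) \<le> ennreal C0 * Lp_norm t (\<lambda>x. ennreal (f x))"
    by blast
  have C0: "Lp_norm s (T_op K f) \<le> ennreal C0 * Lp_norm t (\<lambda>x. ennreal (f x))"
    if "f \<in> borel_measurable lborel" "\<forall>x. 0 \<le> f x" for f
    using C0' that by blast
  define C where "C = max C0 1"
  have Cpos: "0 < C" by (simp add: C_def)
  have "Lp_norm s (Tg K g) \<le> ennreal C * Lp_norm t g" if g: "g \<in> borel_measurable lborel" for g
  proof (cases "Lp_norm t g = top")
    case True
    then show ?thesis using Cpos by (simp add: ennreal_mult_top)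
  next
    case False
    then have fin: "(\<integral>\<^sup>+x. ennpow (g x) t \<partial>lborel) \<noteq> top"
      unfolding Lp_norm_def by simp
    have "AE x in lborel. ennpow (g x) t \<noteq> \<infinity>"
      by (rule nn_integral_PInf_AE[OF _ fin[folded infinity_ennreal_def]]) (use g in measurable)
    then have ae: "AE x in lborel. g x \<noteq> top" by (simp add: infinity_ennreal_def)
    define f where "f x = enn2real (g x)" for x
    have fm: "f \<in> borel_measurable lborel" unfolding f_def using g by measurable
    have fn: "\<forall>x. 0 \<le> f x" by (simp add: f_def)
    have ae2: "AE x in lborel. ennreal (f x) = g x"
      using ae by eventually_elim (auto simp: f_def ennreal_enn2real_if)
    have "Tg K g x = T_op K f x" for x
      unfolding Tg_def T_op_def
    proof (rule nn_integral_cong_AE)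
      show "AE y in lborel. ennreal (K x y) * g y = ennreal (K x y * f y)"
        using ae2
      proof eventually_elim
        case (elim y)
        have "ennreal (K x y * f y) = ennreal (K x y) * ennreal (f y)"
          by (rule ennreal_mult) (use Kn in \<open>auto simp: f_def\<close>)
        then show ?case using elim by simp
      qed
    qed
    then have "Tg K g = T_op K f" by auto
    moreover have "Lp_norm t (\<lambda>x. ennreal (f x)) = Lp_norm t g"
      unfolding Lp_norm_def
      by (rule arg_cong[where f="\<lambda>X. ennpow X (1/t)"], rule nn_integral_cong_AE)
         (use ae2 in \<open>eventually_elim, simp\<close>)
    ultimately have "Lp_norm s (Tg K g) \<le> ennreal C0 * Lp_norm t g"
      using C0[OF fm fn] by simp
    also have "\<dots> \<le> ennreal C * Lp_norm t g"
      by (intro mult_right_mono ennreal_leI) (auto simp: C_def)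
    finally show ?thesis .
  qed
  then show ?thesis using t Cpos by (intro exI[of _ t] exI[of _ C]) auto
qed

definition Hgood :: "nat \<Rightarrow> nat set set \<Rightarrow> bool" where
  "Hgood k E \<longleftrightarrow> simple_graph_on k E \<and> connected_graph k E \<and> (\<forall>v w. rooted_child E v w \<longrightarrow> v < w)"

lemma walk_edge:
  assumes "is_walk E (xs @ a # b # ys)" shows "{a, b} \<in> E"
proof -
  have "Suc (length xs) < length (xs @ a # b # ys)" by simp
  then have "{(xs @ a # b # ys) ! length xs, (xs @ a # b # ys) ! Suc (length xs)} \<in> E"
    using assms unfolding is_walk_def by blast
  then show ?thesis by (simp add: nth_append)
qed

lemma walk_prefix:
  assumes "is_walk E (xs @ ys)" "xs \<noteq> []" shows "is_walk E xs"
  unfolding is_walk_def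
proof (intro conjI allI impI)
  show "xs \<noteq> []" by fact
  fix i assume i: "Suc i < length xs"
  then have "{(xs @ ys) ! i, (xs @ ys) ! Suc i} \<in> E" using assms(1) unfolding is_walk_def by auto
  then show "{xs ! i, xs ! Suc i} \<in> E" using i by (simp add: nth_append)
qed

lemma walk_snoc:
  assumes "is_walk E xs" "{last xs, b} \<in> E" shows "is_walk E (xs @ [b])"
  unfolding is_walk_def
proof (intro conjI allI impI)
  show "xs @ [b] \<noteq> []" by simp
  fix i assume i: "Suc i < length (xs @ [b])"
  have ne: "xs \<noteq> []" using assms(1) by (simp add: is_walk_def)
  show "{(xs @ [b]) ! i, (xs @ [b]) ! Suc i} \<in> E"
  proof (cases "Suc i < length xs")
    case True
    then show ?thesis using assms(1) unfolding is_walk_def by (simp add: nth_append)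
  next
    case False
    then have "Suc i = length xs" using i by simp
    then have "xs ! i = last xs" using ne by (metis diff_Suc_1 last_conv_nth)
    then show ?thesis using assms(2) \<open>Suc i = length xs\<close> by (simp add: nth_append)
  qed
qed

lemma path_prefix:
  assumes "is_path E (xs @ ys)" "xs \<noteq> []" shows "is_path E xs"
  using assms walk_prefix unfolding is_path_def by auto

lemma path_snoc:
  assumes "is_path E xs" "{last xs, b} \<in> E" "b \<notin> set xs" shows "is_path E (xs @ [b])"
  using assms walk_snoc unfolding is_path_def by auto

lemma path_mono:
  assumes "is_path E ps" "E \<subseteq> F" shows "is_path F ps"
  using assms unfolding is_path_def is_walk_def by blast

context
  fixes k :: nat and E :: "nat set set"
  assumes H: "Hgood k E" and k2: "2 \<le> k"
begin

lemma sg: "simple_graph_on k E" using H by (simp add: Hgood_def)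
lemma lab: "rooted_child E v w \<Longrightarrow> v < w" using H by (simp add: Hgood_def)
lemma con: "u \<in> {1..k} \<Longrightarrow> v \<in> {1..k} \<Longrightarrow> \<exists>ps. is_path E ps \<and> hd ps = u \<and> last ps = v"
  using H by (simp add: Hgood_def connected_graph_def)

lemma edge_le: assumes "{a, b} \<in> E" shows "a \<in> {1..k}" "b \<in> {1..k}" "a \<noteq> b"
proof -
  have "{a, b} \<subseteq> {1..k}" "card {a, b} = 2" using sg assms unfolding simple_graph_on_def by blast+
  then show "a \<in> {1..k}" "b \<in> {1..k}" "a \<noteq> b" by (cases "a = b", auto)
qed

lemma C1:
  assumes p: "is_path E ps" and h: "hd ps = 1" and kin: "k \<in> set ps" shows "last ps = k"
proof (rule ccontr)
  assume nl: "last ps \<noteq> k"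
  obtain xs ys where ps: "ps = xs @ k # ys" using split_list[OF kin] by blast
  have "ys \<noteq> []" using nl ps by auto
  then obtain u ys' where ys: "ys = u # ys'" by (cases ys) auto
  have "is_path E ((xs @ [k, u]) @ ys')" using p ps ys by simp
  then have "is_path E (xs @ [k, u])" by (rule path_prefix) simp
  moreover have "hd (xs @ [k, u]) = 1" using h ps ys by (cases xs) auto
  ultimately have "rooted_child E k u" unfolding rooted_child_def by blast
  then have "k < u" by (rule lab)
  moreover have "{k, u} \<in> E" using p ps ys walk_edge[of E xs k u ys'] by (simp add: is_path_def)
  ultimately show False using edge_le(2)[of k u] by auto
qed

lemma C2:
  assumes "{w, k} \<in> E" shows "\<exists>Q. is_path E Q \<and> hd Q = 1 \<and> last Q = w \<and> k \<notin> set Q"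
proof -
  have w: "w \<in> {1..k}" "w \<noteq> k" using edge_le[OF assms] by auto
  obtain Q where Q: "is_path E Q" "hd Q = 1" "last Q = w" using con[of 1 w] w k2 by auto
  have "k \<notin> set Q" using C1[OF Q(1,2)] Q(3) w by auto
  then show ?thesis using Q by blast
qed

lemma C4':
  assumes Q: "is_path E Q" "hd Q = 1" "last Q = w" "k \<notin> set Q"
    and e: "{w, k} \<in> E" "{v, k} \<in> E" and v: "v \<notin> set Q"
  shows False
proof -
  have vk: "v \<noteq> k" "v \<in> {1..k}" using edge_le[OF e(2)] by auto
  have Qne: "Q \<noteq> []" using Q(1) by (simp add: is_path_def is_walk_def)
  have p1: "is_path E (Q @ [k])" using Q e by (intro path_snoc) auto
  have p2: "is_path E (Q @ [k] @ [v])"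
    using path_snoc[OF p1, of v] e vk v by (auto simp: insert_commute)
  obtain Q' where "Q = Q' @ [w]" using Qne Q(3) by (metis append_butlast_last_id)
  then have "is_path E (Q' @ [w, k, v])" using p2 by simp
  then have "is_path E ((Q' @ [w]) @ [k, v])" by simp
  moreover have "hd ((Q' @ [w]) @ [k, v]) = 1" using Q(2) \<open>Q = Q' @ [w]\<close> by (cases Q') auto
  ultimately have "rooted_child E k v" unfolding rooted_child_def by blast
  then have "k < v" by (rule lab)
  then show False using vk by auto
qed

lemma C4:
  assumes e: "{w, k} \<in> E" "{v, k} \<in> E" shows "v = w"
proof (rule ccontr)
  assume vw: "v \<noteq> w"
  obtain Q where Q: "is_path E Q" "hd Q = 1" "last Q = w" "k \<notin> set Q" using C2[OF e(1)] by blast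
  have "v \<in> set Q" using C4'[OF Q e] by blast
  then obtain A B where QAB: "Q = A @ v # B" by (meson split_list)
  have Bne: "B \<noteq> []" using QAB Q(3) vw by auto
  have dQ: "distinct Q" using Q(1) by (simp add: is_path_def)
  have lB: "last Q = last B" using QAB Bne by simp
  have wB: "w \<in> set B" using lB Q(3) Bne last_in_set by metis
  have p: "is_path E (A @ [v])"
  proof (rule path_prefix)
    show "is_path E ((A @ [v]) @ B)" using Q(1) QAB by simp
  qed simp
  have h: "hd (A @ [v]) = 1" using Q(2) QAB by (cases A) simp_all
  have l: "last (A @ [v]) = v" by simp
  have "distinct ((A @ [v]) @ B)" using dQ QAB by simp
  then have "set (A @ [v]) \<inter> set B = {}" unfolding distinct_append by blast
  then have w1: "w \<notin> set (A @ [v])" using wB by blast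
  have k1: "k \<notin> set (A @ [v])" using Q(4) QAB by simp
  show False by (rule C4'[OF p h l k1 e(2) e(1) w1])
qed

lemma leaf_exists: "\<exists>m. 1 \<le> m \<and> m < k \<and> {m, k} \<in> E"
proof -
  obtain ps where ps: "is_path E ps" "hd ps = 1" "last ps = k" using con[of 1 k] k2 by auto
  have ne: "ps \<noteq> []" using ps(1) by (simp add: is_path_def is_walk_def)
  have ps1: "ps = butlast ps @ [k]" using ne ps(3) by (metis append_butlast_last_id)
  have bne: "butlast ps \<noteq> []"
  proof
    assume "butlast ps = []"
    then have "ps = [k]" using ps1 by (metis append_Nil)
    then show False using ps(2) k2 by simp
  qed
  define xs where "xs = butlast (butlast ps)"
  define m where "m = last (butlast ps)"
  have b: "butlast ps = xs @ [m]" unfolding xs_def m_def using bne by simp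
  have xs: "ps = xs @ [m, k]"
  proof -
    have "ps = butlast ps @ [k]" by (fact ps1)
    also have "\<dots> = xs @ [m, k]" using b by simp
    finally show ?thesis .
  qed
  have "rooted_child E m k" unfolding rooted_child_def using ps xs by (intro exI[of _ xs]) auto
  then have "m < k" by (rule lab)
  moreover have "{m, k} \<in> E" using ps(1) xs walk_edge[of E xs m k "[]"] by (simp add: is_path_def)
  ultimately show ?thesis using edge_le(1)[of m k] by auto
qed

lemma edge_unique:
  assumes m: "{m, k} \<in> E" and e: "e \<in> E" "k \<in> e" shows "e = {m, k}"
proof -
  have "card e = 2" using sg e(1) unfolding simple_graph_on_def by blast
  then obtain a b where ab: "e = {a, b}" "a \<noteq> b" by (meson card_2_iff)
  obtain w where w: "e = {w, k}"
  proof (cases "a = k")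
    case True then show ?thesis using that[of b] ab by (simp add: insert_commute)
  next
    case False then have "b = k" using e(2) ab by auto
    then show ?thesis using that[of a] ab by simp
  qed
  then have "m = w" using C4[of w m] e(1) m by simp
  then show ?thesis using w by simp
qed

lemma Hgood_step:
  assumes m: "1 \<le> m" "m < k" "{m, k} \<in> E"
  shows "Hgood (k - 1) (E - {{m, k}})"
  unfolding Hgood_def
proof (intro conjI allI impI)
  show "simple_graph_on (k - 1) (E - {{m, k}})"
    unfolding simple_graph_on_def
  proof
    fix e assume e: "e \<in> E - {{m, k}}"
    then have e1: "e \<subseteq> {1..k}" "card e = 2" using sg unfolding simple_graph_on_def by auto
    have "k \<notin> e" using edge_unique[OF m(3), of e] e by auto
    have "e \<subseteq> {1..k-1}"
    proof
      fix x assume "x \<in> e"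
      then have "x \<in> {1..k}" "x \<noteq> k" using e1(1) \<open>k \<notin> e\<close> by auto
      then show "x \<in> {1..k-1}" by auto
    qed
    then show "e \<subseteq> {1..k - 1} \<and> card e = 2" using e1 by simp
  qed
next
  fix v w assume "rooted_child (E - {{m, k}}) v w"
  then have "rooted_child E v w" unfolding rooted_child_def using path_mono[of "E - {{m, k}}" _ E] by blast
  then show "v < w" by (rule lab)
next
  show "connected_graph (k - 1) (E - {{m, k}})"
    unfolding connected_graph_def
  proof (intro ballI)
    fix u v assume u: "u \<in> {1..k-1}" and v: "v \<in> {1..k-1}"
    have uk: "u \<in> {1..k}" "v \<in> {1..k}" using u v by auto
    obtain ps where ps: "is_path E ps" "hd ps = u" "last ps = v" using con[OF uk] by blast
    have ne: "ps \<noteq> []" using ps(1) by (simp add: is_path_def is_walk_def)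
    have knot: "k \<notin> set ps"
    proof
      assume "k \<in> set ps"
      then obtain A B where AB: "ps = A @ k # B" by (meson split_list)
      have Ane: "A \<noteq> []" using AB ps(2) u k2 by auto
      have "last ps = last (k # B)" using AB by simp
      then have Bne: "B \<noteq> []" using ps(3) v k2 by auto
      obtain A' a where A: "A = A' @ [a]" using Ane by (metis append_butlast_last_id)
      obtain b B' where B: "B = b # B'" using Bne by (cases B) auto
      have w: "is_walk E ps" using ps(1) by (simp add: is_path_def)
      have e1: "{a, k} \<in> E" using walk_edge[of E A' a k "b # B'"] w AB A B by simp
      have e2: "{b, k} \<in> E" using walk_edge[of E "A' @ [a]" k b B'] w AB A B by (simp add: insert_commute)
      have "a = m" using C4[OF m(3) e1] by simp
      moreover have "b = m" using C4[OF m(3) e2] by simp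
      moreover have "distinct ps" using ps(1) by (simp add: is_path_def)
      ultimately show False using AB A B by simp
    qed
    have "is_path (E - {{m, k}}) ps"
      unfolding is_path_def is_walk_def
    proof (intro conjI allI impI)
      show "ps \<noteq> []" by fact
      show "distinct ps" using ps(1) by (simp add: is_path_def)
      fix i assume i: "Suc i < length ps"
      then have "{ps ! i, ps ! Suc i} \<in> E" using ps(1) by (simp add: is_path_def is_walk_def)
      moreover have "ps ! Suc i \<noteq> k" using knot i nth_mem by metis
      moreover have "ps ! i \<noteq> k" using knot i nth_mem by (metis Suc_lessD)
      ultimately have "k \<notin> {ps ! i, ps ! Suc i}" "{ps ! i, ps ! Suc i} \<in> E" by auto
      moreover have "k \<in> {m, k}" by simp
      ultimately show "{ps ! i, ps ! Suc i} \<in> E - {{m, k}}" by (metis DiffI singletonD)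
    qed
    then show "\<exists>ps. is_path (E - {{m, k}}) ps \<and> hd ps = u \<and> last ps = v" using ps by blast
  qed
qed

end

definition PE :: "nat set set \<Rightarrow> (nat \<times> nat) set" where
  "PE E = {(i, j). i < j \<and> {i, j} \<in> E}"

definition Fint :: "nat \<Rightarrow> nat set set \<Rightarrow> ('a::euclidean_space \<Rightarrow> 'a \<Rightarrow> real) \<Rightarrow> (nat \<Rightarrow> 'a \<Rightarrow> ennreal) \<Rightarrow> 'a \<Rightarrow> (nat \<Rightarrow> 'a) \<Rightarrow> ennreal" where
  "Fint k E K g x1 y = (\<Prod>(i, j)\<in>PE E. ennreal (K ((y(1 := x1)) i) ((y(1 := x1)) j))) * (\<Prod>i\<in>{2..k}. g i ((y(1 := x1)) i))"

definition V :: "nat \<Rightarrow> nat set set \<Rightarrow> ('a::euclidean_space \<Rightarrow> 'a \<Rightarrow> real) \<Rightarrow> (nat \<Rightarrow> 'a \<Rightarrow> ennreal) \<Rightarrow> 'a \<Rightarrow> ennreal" where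
  "V k E K g x1 = (\<integral>\<^sup>+ y. Fint k E K g x1 y \<partial>(PiM {2..k} (\<lambda>_. lborel)))"

lemma PE_sub: "simple_graph_on k E \<Longrightarrow> PE E \<subseteq> {1..k} \<times> {1..k}"
  unfolding PE_def simple_graph_on_def by auto

lemma PE_finite: "simple_graph_on k E \<Longrightarrow> finite (PE E)"
  by (rule finite_subset[OF PE_sub]) auto

lemma comp_meas:
  fixes i k :: nat
  assumes "i \<in> {1..k}"
  shows "(\<lambda>y. (y(1 := x1)) i) \<in> measurable (PiM {2..k} (\<lambda>_. lborel)) (lborel :: 'a::euclidean_space measure)"
proof (cases "i = 1")
  case True then show ?thesis by simp
next
  case False
  then have "i \<in> {2..k}" using assms by auto
  then have "(\<lambda>y. y i) \<in> measurable (PiM {2..k} (\<lambda>_. lborel)) (lborel :: 'a measure)"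
    by (rule measurable_component_singleton)
  then show ?thesis using False by simp
qed

lemma K_comp_meas:
  fixes K :: "'a::euclidean_space \<Rightarrow> 'a \<Rightarrow> real"
  assumes Km: "(\<lambda>z. case z of (x, y) \<Rightarrow> K x y) \<in> borel_measurable (lborel \<Otimes>\<^sub>M lborel)"
    and a: "a \<in> measurable M lborel" and b: "b \<in> measurable M lborel"
  shows "(\<lambda>y. ennreal (K (a y) (b y))) \<in> borel_measurable M"
proof -
  have "(\<lambda>y. (a y, b y)) \<in> measurable M (lborel \<Otimes>\<^sub>M lborel)" using a b by (rule measurable_Pair)
  from measurable_compose[OF this Km] have "(\<lambda>y. K (a y) (b y)) \<in> borel_measurable M" by simp
  from measurable_compose[OF this measurable_ennreal] show ?thesis .
qed

lemma Fint_meas: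
  fixes K :: "'a::euclidean_space \<Rightarrow> 'a \<Rightarrow> real"
  assumes sg: "simple_graph_on k E"
    and Km: "(\<lambda>z. case z of (x, y) \<Rightarrow> K x y) \<in> borel_measurable (lborel \<Otimes>\<^sub>M lborel)"
    and g: "\<And>i. i \<in> {2..k} \<Longrightarrow> g i \<in> borel_measurable lborel"
  shows "Fint k E K g x1 \<in> borel_measurable (PiM {2..k} (\<lambda>_. lborel))"
proof -
  have 1: "(\<lambda>y. \<Prod>(i, j)\<in>PE E. ennreal (K ((y(1 := x1)) i) ((y(1 := x1)) j))) \<in> borel_measurable (PiM {2..k} (\<lambda>_. lborel))"
  proof (rule borel_measurable_prod_ennreal)
    fix p assume p: "p \<in> PE E"
    obtain i j where ij: "p = (i, j)" by (cases p)
    have "i \<in> {1..k}" "j \<in> {1..k}" using PE_sub[OF sg] p ij by auto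
    then have "(\<lambda>y. ennreal (K ((y(1 := x1)) i) ((y(1 := x1)) j))) \<in> borel_measurable (PiM {2..k} (\<lambda>_. lborel))"
      by (intro K_comp_meas[OF Km] comp_meas)
    then show "(\<lambda>y. case p of (i, j) \<Rightarrow> ennreal (K ((y(1 := x1)) i) ((y(1 := x1)) j))) \<in> borel_measurable (PiM {2..k} (\<lambda>_. lborel))"
      using ij by simp
  qed
  have 2: "(\<lambda>y. \<Prod>i\<in>{2..k}. g i ((y(1 := x1)) i)) \<in> borel_measurable (PiM {2..k} (\<lambda>_. lborel))"
  proof (rule borel_measurable_prod_ennreal)
    fix i assume i: "i \<in> {2..k}"
    have "(\<lambda>y. (y(1 := x1)) i) \<in> measurable (PiM {2..k} (\<lambda>_. lborel)) lborel"
      using i by (intro comp_meas) auto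
    from measurable_compose[OF this g[OF i]] show "(\<lambda>y. g i ((y(1 := x1)) i)) \<in> borel_measurable (PiM {2..k} (\<lambda>_. lborel))" .
  qed
  show ?thesis unfolding Fint_def[abs_def] by (rule borel_measurable_times_ennreal[OF 1 2])
qed

lemma V_step:
  fixes K :: "'a::euclidean_space \<Rightarrow> 'a \<Rightarrow> real"
  assumes sg: "simple_graph_on k E" and k2: "2 \<le> k" and m: "1 \<le> m" "m < k" "{m, k} \<in> E"
    and uniq: "\<And>e. e \<in> E \<Longrightarrow> k \<in> e \<Longrightarrow> e = {m, k}"
    and Km: "(\<lambda>z. case z of (x, y) \<Rightarrow> K x y) \<in> borel_measurable (lborel \<Otimes>\<^sub>M lborel)"
    and g: "\<And>i. i \<in> {2..k} \<Longrightarrow> g i \<in> borel_measurable lborel"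
  shows "V k E K g x1 = (\<integral>\<^sup>+ x. Fint (k - 1) (E - {{m, k}}) K g x1 x * Tg K (g k) ((x(1 := x1)) m) \<partial>(PiM {2..k-1} (\<lambda>_. lborel)))"
proof -
  interpret product_sigma_finite "\<lambda>_::nat. lborel :: 'a measure" by standard
  define I where "I = {2..k-1}"
  define E' where "E' = E - {{m, k}}"
  have kI: "{2..k} = insert k I" "k \<notin> I" "finite I" using k2 by (auto simp: I_def)
  have Fm: "Fint k E K g x1 \<in> borel_measurable (PiM (insert k I) (\<lambda>_. lborel))"
    using Fint_meas[OF sg Km g] kI(1) by simp
  have PEeq: "PE E = insert (m, k) (PE E')"
    using m unfolding PE_def E'_def by (auto simp: doubleton_eq_iff)
  have notin: "(m, k) \<notin> PE E'" unfolding PE_def E'_def by auto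
  have fin: "finite (PE E')" using PE_finite[OF sg] PEeq by simp
  have PE'k: "i \<noteq> k \<and> j \<noteq> k" if "(i, j) \<in> PE E'" for i j
  proof -
    have "{i, j} \<in> E" "{i, j} \<noteq> {m, k}" using that unfolding PE_def E'_def by auto
    then show ?thesis using uniq[of "{i, j}"] by auto
  qed
  have "V k E K g x1 = (\<integral>\<^sup>+ y. Fint k E K g x1 y \<partial>(PiM (insert k I) (\<lambda>_. lborel)))"
    unfolding V_def kI(1) ..
  also have "\<dots> = (\<integral>\<^sup>+ x. \<integral>\<^sup>+ t. Fint k E K g x1 (x(k := t)) \<partial>lborel \<partial>(PiM I (\<lambda>_. lborel)))"
    by (rule product_nn_integral_insert[OF kI(3) kI(2) Fm])
  also have "\<dots> = (\<integral>\<^sup>+ x. Fint (k - 1) E' K g x1 x * Tg K (g k) ((x(1 := x1)) m) \<partial>(PiM I (\<lambda>_. lborel)))"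
  proof (rule nn_integral_cong)
    fix x :: "nat \<Rightarrow> 'a"
    define z where "z = x(1 := x1)"
    have pt: "Fint k E K g x1 (x(k := t)) = Fint (k - 1) E' K g x1 x * (ennreal (K (z m) t) * g k t)" for t
    proof -
      define z' where "z' = (x(k := t))(1 := x1)"
      have z'i: "z' i = z i" if "i \<noteq> k" for i using that unfolding z'_def z_def by auto
      have z'k: "z' k = t" using k2 unfolding z'_def by auto
      have P1: "(\<Prod>(i, j)\<in>PE E. ennreal (K (z' i) (z' j))) = ennreal (K (z m) t) * (\<Prod>(i, j)\<in>PE E'. ennreal (K (z i) (z j)))"
      proof -
        have "(\<Prod>(i, j)\<in>PE E'. ennreal (K (z' i) (z' j))) = (\<Prod>(i, j)\<in>PE E'. ennreal (K (z i) (z j)))"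
          by (rule prod.cong) (auto simp: z'i dest: PE'k)
        moreover have "z' m = z m" using m by (intro z'i) simp
        ultimately show ?thesis unfolding PEeq prod.insert[OF fin notin] by (simp add: z'k)
      qed
      have P2: "(\<Prod>i\<in>{2..k}. g i (z' i)) = g k t * (\<Prod>i\<in>{2..k-1}. g i (z i))"
      proof -
        have "(\<Prod>i\<in>{2..k-1}. g i (z' i)) = (\<Prod>i\<in>{2..k-1}. g i (z i))"
          by (rule prod.cong) (auto simp: z'i)
        then show ?thesis unfolding kI(1) prod.insert[OF kI(3) kI(2)] by (simp add: z'k I_def)
      qed
      show ?thesis unfolding Fint_def z'_def[symmetric] z_def[symmetric] P1 P2
        using k2 by (simp add: ac_simps)
    qed
    have h1[measurable]: "(\<lambda>t. ennreal (K (z m) t)) \<in> borel_measurable lborel"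
      by (rule K_comp_meas[OF Km]) auto
    have gk[measurable]: "g k \<in> borel_measurable lborel" using k2 by (intro g) auto
    have tm: "(\<lambda>t. ennreal (K (z m) t) * g k t) \<in> borel_measurable lborel"
      by measurable
    show "(\<integral>\<^sup>+ t. Fint k E K g x1 (x(k := t)) \<partial>lborel) = Fint (k - 1) E' K g x1 x * Tg K (g k) ((x(1 := x1)) m)"
      unfolding pt Tg_def z_def[symmetric] by (rule nn_integral_cmult[OF tm])
  qed
  finally show ?thesis unfolding I_def E'_def .
qed

definition W :: "nat \<Rightarrow> nat set set \<Rightarrow> ('a::euclidean_space \<Rightarrow> 'a \<Rightarrow> real) \<Rightarrow> (nat \<Rightarrow> 'a \<Rightarrow> ennreal) \<Rightarrow> 'a \<Rightarrow> ennreal" where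
  "W k E K g x1 = V k E K g x1 * g 1 x1"

lemma Fint_cong:
  assumes "\<And>i. i \<in> {2..k} \<Longrightarrow> g i = h i"
  shows "Fint k E K g x1 = Fint k E K h x1"
  unfolding Fint_def[abs_def] using assms by (intro ext arg_cong2[where f="(*)"] refl prod.cong) auto

lemma V_cong:
  assumes "\<And>i. i \<in> {2..k} \<Longrightarrow> g i = h i"
  shows "V k E K g x1 = V k E K h x1"
  unfolding V_def using Fint_cong[OF assms] by simp

lemma W_step:
  fixes K :: "'a::euclidean_space \<Rightarrow> 'a \<Rightarrow> real"
  assumes H: "Hgood k E" and k2: "2 \<le> k" and m: "1 \<le> m" "m < k" "{m, k} \<in> E"
    and Km: "(\<lambda>z. case z of (x, y) \<Rightarrow> K x y) \<in> borel_measurable (lborel \<Otimes>\<^sub>M lborel)"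
    and g: "\<And>i. i \<in> {1..k} \<Longrightarrow> g i \<in> borel_measurable lborel"
  shows "W k E K g x1 = W (k - 1) (E - {{m, k}}) K (g(m := (\<lambda>x. g m x * Tg K (g k) x))) x1"
proof -
  define E' where "E' = E - {{m, k}}"
  define g' where "g' = g(m := (\<lambda>x. g m x * Tg K (g k) x))"
  have sg: "simple_graph_on k E" using H by (simp add: Hgood_def)
  have sg': "simple_graph_on (k - 1) E'" using Hgood_step[OF H k2 m] by (simp add: Hgood_def E'_def)
  have uniq: "\<And>e. e \<in> E \<Longrightarrow> k \<in> e \<Longrightarrow> e = {m, k}" using edge_unique[OF H k2 m(3)] by blast
  have g2: "\<And>i. i \<in> {2..k} \<Longrightarrow> g i \<in> borel_measurable lborel" using g by auto
  have g2': "\<And>i. i \<in> {2..k-1} \<Longrightarrow> g i \<in> borel_measurable lborel" using g by auto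
  have VS: "V k E K g x1 = (\<integral>\<^sup>+ x. Fint (k - 1) E' K g x1 x * Tg K (g k) ((x(1 := x1)) m) \<partial>(PiM {2..k-1} (\<lambda>_. lborel)))"
    unfolding E'_def by (rule V_step[OF sg k2 m uniq Km g2])
  show ?thesis
  proof (cases "m = 1")
    case True
    have "V k E K g x1 = (\<integral>\<^sup>+ x. Fint (k - 1) E' K g x1 x * Tg K (g k) x1 \<partial>(PiM {2..k-1} (\<lambda>_. lborel)))"
      unfolding VS using True by simp
    also have "\<dots> = V (k - 1) E' K g x1 * Tg K (g k) x1"
      unfolding V_def by (rule nn_integral_multc[OF Fint_meas[OF sg' Km g2']])
    also have "V (k - 1) E' K g x1 = V (k - 1) E' K g' x1"
      by (rule V_cong) (use True in \<open>auto simp: g'_def\<close>)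
    finally have "V k E K g x1 = V (k - 1) E' K g' x1 * Tg K (g k) x1" .
    moreover have "g' 1 x1 = g 1 x1 * Tg K (g k) x1" using True by (simp add: g'_def)
    ultimately show ?thesis unfolding W_def E'_def[symmetric] g'_def[symmetric] by (simp add: ac_simps)
  next
    case False
    then have m2: "m \<in> {2..k-1}" using m by auto
    have "Fint (k - 1) E' K g x1 x * Tg K (g k) ((x(1 := x1)) m) = Fint (k - 1) E' K g' x1 x" for x
    proof -
      define z where "z = x(1 := x1)"
      have "(\<Prod>i\<in>{2..k-1}. g' i (z i)) = g' m (z m) * (\<Prod>i\<in>{2..k-1} - {m}. g' i (z i))"
        by (rule prod.remove[OF _ m2]) simp
      also have "(\<Prod>i\<in>{2..k-1} - {m}. g' i (z i)) = (\<Prod>i\<in>{2..k-1} - {m}. g i (z i))"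
        by (rule prod.cong) (auto simp: g'_def)
      also have "g' m (z m) = g m (z m) * Tg K (g k) (z m)" by (simp add: g'_def)
      finally have "(\<Prod>i\<in>{2..k-1}. g' i (z i)) = g m (z m) * Tg K (g k) (z m) * (\<Prod>i\<in>{2..k-1} - {m}. g i (z i))" .
      moreover have "(\<Prod>i\<in>{2..k-1}. g i (z i)) = g m (z m) * (\<Prod>i\<in>{2..k-1} - {m}. g i (z i))"
        by (rule prod.remove[OF _ m2]) simp
      ultimately show ?thesis unfolding Fint_def z_def[symmetric] by (simp add: ac_simps)
    qed
    then have "V k E K g x1 = V (k - 1) E' K g' x1" unfolding VS by (simp add: V_def)
    moreover have "g' 1 = g 1" using False by (simp add: g'_def)
    ultimately show ?thesis unfolding W_def E'_def[symmetric] g'_def[symmetric] by simp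
  qed
qed

lemma W_base:
  fixes K :: "'a::euclidean_space \<Rightarrow> 'a \<Rightarrow> real"
  assumes "Hgood 1 E"
  shows "W 1 E K g x1 = g 1 x1"
proof -
  have "E = {}"
  proof (rule ccontr)
    assume "E \<noteq> {}"
    then obtain e where e: "e \<in> E" by blast
    then have "e \<subseteq> {1..1}" "card e = 2" using assms unfolding Hgood_def simple_graph_on_def by auto
    then have "card e \<le> card {1..1::nat}" by (intro card_mono) auto
    then show False using \<open>card e = 2\<close> by simp
  qed
  then have "PE E = {}" by (simp add: PE_def)
  then have F1: "Fint 1 E K g x1 = (\<lambda>_. 1)" by (simp add: Fint_def fun_eq_iff)
  have "V 1 E K g x1 = 1"
    unfolding V_def F1 by (simp add: PiM_empty)
  then show ?thesis by (simp add: W_def)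
qed

lemma main_ind:
  fixes K :: "'a::euclidean_space \<Rightarrow> 'a \<Rightarrow> real"
  assumes Kn: "\<forall>x y. 0 \<le> K x y"
    and Km: "(\<lambda>z. case z of (x, y) \<Rightarrow> K x y) \<in> borel_measurable (lborel \<Otimes>\<^sub>M lborel)"
    and imp: "univ_Lp_improving K" and q: "1 \<le> q"
  shows "Hgood k E \<Longrightarrow> 1 \<le> k \<Longrightarrow> \<exists>p C. 0 < C \<and> (\<forall>i\<in>{1..k}. 1 \<le> p i) \<and> 1 / q \<le> (\<Sum>i=1..k. 1 / p i) \<and>
     (2 \<le> k \<longrightarrow> (\<forall>i\<in>{1..k}. 1 < p i) \<and> 1 / q < (\<Sum>i=1..k. 1 / p i)) \<and>
     (\<forall>g::nat \<Rightarrow> 'a \<Rightarrow> ennreal. (\<forall>i\<in>{1..k}. g i \<in> borel_measurable lborel) \<longrightarrow>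
        Lp_norm q (W k E K g) \<le> ennreal C * (\<Prod>i=1..k. Lp_norm (p i) (g i)))"
proof (induction k arbitrary: E)
  case 0 then show ?case by simp
next
  case (Suc k')
  show ?case
  proof (cases "k' = 0")
    case True
    then have H1: "Hgood 1 E" using Suc.prems by simp
    have "Lp_norm q (W 1 E K g) \<le> ennreal 1 * (\<Prod>i=1..1. Lp_norm q (g i))" for g
    proof -
      have "W 1 E K g = g 1" by (rule ext) (rule W_base[OF H1])
      then show ?thesis by simp
    qed
    then show ?thesis using True q by (intro exI[of _ "\<lambda>_. q"] exI[of _ 1]) auto
  next
    case False
    define k where "k = Suc k'"
    have H: "Hgood k E" and k2: "2 \<le> k" using Suc.prems False by (auto simp: k_def)
    obtain m where m: "1 \<le> m" "m < k" "{m, k} \<in> E" using leaf_exists[OF H k2] by blast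
    define E' where "E' = E - {{m, k}}"
    have H': "Hgood k' E'" using Hgood_step[OF H k2 m] by (simp add: E'_def k_def)
    have k'1: "1 \<le> k'" using False by simp
    obtain p' C' where C'pos: "0 < C'" and p'1: "\<forall>i\<in>{1..k'}. 1 \<le> p' i"
      and p's: "1 / q \<le> (\<Sum>i=1..k'. 1 / p' i)"
      and p'2: "2 \<le> k' \<longrightarrow> (\<forall>i\<in>{1..k'}. 1 < p' i) \<and> 1 / q < (\<Sum>i=1..k'. 1 / p' i)"
      and bnd': "\<forall>g::nat \<Rightarrow> 'a \<Rightarrow> ennreal. (\<forall>i\<in>{1..k'}. g i \<in> borel_measurable lborel) \<longrightarrow>
        Lp_norm q (W k' E' K g) \<le> ennreal C' * (\<Prod>i=1..k'. Lp_norm (p' i) (g i))"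
      using Suc.IH[OF H' k'1] by blast
    define r where "r = p' m"
    have mk': "m \<in> {1..k'}" using m by (auto simp: k_def)
    have r1: "1 \<le> r" using p'1 mk' by (simp add: r_def)
    have "1 < 2 * r" using r1 by simp
    from T_bound[OF imp this Kn] obtain t CT where t: "1 < t" "t < 2 * r" and CT: "0 < CT"
      and Tb: "\<forall>g. g \<in> borel_measurable lborel \<longrightarrow> Lp_norm (2 * r) (Tg K g) \<le> ennreal CT * Lp_norm t g"
      by blast
    define p where "p = p'(m := 2 * r, k := t)"
    have pk: "p k = t" by (simp add: p_def)
    have pm: "p m = 2 * r" using m by (simp add: p_def)
    have pi: "p i = p' i" if "i \<noteq> m" "i \<noteq> k" for i using that by (simp add: p_def)
    have Ik: "{1..k} = insert k {1..k'}" "k \<notin> {1..k'}" by (auto simp: k_def)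
    have others: "1 < p' i" if "i \<in> {1..k'}" "i \<noteq> m" for i
    proof (cases "2 \<le> k'")
      case True then show ?thesis using p'2 that by auto
    next
      case False then have "k' = 1" using k'1 by simp
      then show ?thesis using that m by (auto simp: k_def)
    qed
    have p_gt: "\<forall>i\<in>{1..k}. 1 < p i"
    proof
      fix i assume i: "i \<in> {1..k}"
      show "1 < p i"
      proof (cases "i = k")
        case True then show ?thesis using pk t by simp
      next
        case F: False
        show ?thesis
        proof (cases "i = m")
          case True then show ?thesis using pm r1 by simp
        next
          case False
          have "i \<in> {1..k'}" using i F by (auto simp: k_def)
          then show ?thesis using pi[OF False F] others[of i] False by simp
        qed
      qed
    qed
    define S where "S = (\<Sum>i\<in>{1..k'} - {m}. 1 / p' i)"
    have sA: "(\<Sum>i=1..k'. 1 / p' i) = 1 / r + S"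
      unfolding S_def r_def by (rule sum.remove[OF _ mk']) simp
    have sB: "(\<Sum>i=1..k. 1 / p i) = 1 / t + (1 / (2 * r) + S)"
    proof -
      have "(\<Sum>i=1..k. 1 / p i) = 1 / p k + (\<Sum>i=1..k'. 1 / p i)"
        unfolding Ik(1) by (rule sum.insert[OF _ Ik(2)]) simp
      also have "(\<Sum>i=1..k'. 1 / p i) = 1 / p m + (\<Sum>i\<in>{1..k'} - {m}. 1 / p i)"
        by (rule sum.remove[OF _ mk']) simp
      also have "(\<Sum>i\<in>{1..k'} - {m}. 1 / p i) = S"
        unfolding S_def by (rule sum.cong) (auto simp: pi k_def)
      finally show ?thesis using pk pm by simp
    qed
    have "1 / (2 * r) < 1 / t" using t by (intro divide_strict_left_mono) auto
    then have sum_gt: "1 / q < (\<Sum>i=1..k. 1 / p i)"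
      using sA sB p's by (simp add: field_simps) 
    have bnd: "Lp_norm q (W k E K g) \<le> ennreal (C' * CT) * (\<Prod>i=1..k. Lp_norm (p i) (g i))"
      if g: "\<forall>i\<in>{1..k}. g i \<in> borel_measurable lborel" for g
    proof -
      define g' where "g' = g(m := (\<lambda>x. g m x * Tg K (g k) x))"
      have gk[measurable]: "g k \<in> borel_measurable lborel" using g k2 by auto
      have gm[measurable]: "g m \<in> borel_measurable lborel" using g m by auto
      have Tgm[measurable]: "Tg K (g k) \<in> borel_measurable lborel" by (rule Tg_meas[OF Km gk])
      have gmT: "(\<lambda>x. g m x * Tg K (g k) x) \<in> borel_measurable lborel" by measurable
      have g'm: "\<forall>i\<in>{1..k'}. g' i \<in> borel_measurable lborel"
        using g gmT by (auto simp: g'_def k_def)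
      have g1: "\<And>i. i \<in> {1..k} \<Longrightarrow> g i \<in> borel_measurable lborel" using g by blast
      have WW: "W k E K g = W k' E' K g'"
        by (rule ext, subst W_step[OF H k2 m Km g1]) (simp_all add: k_def E'_def g'_def)
      define Q where "Q = (\<Prod>i\<in>{1..k'} - {m}. Lp_norm (p' i) (g i))"
      have e1: "(\<Prod>i=1..k'. Lp_norm (p' i) (g' i)) = Lp_norm r (g' m) * Q"
      proof -
        have "(\<Prod>i=1..k'. Lp_norm (p' i) (g' i)) = Lp_norm (p' m) (g' m) * (\<Prod>i\<in>{1..k'} - {m}. Lp_norm (p' i) (g' i))"
          by (rule prod.remove[OF _ mk']) simp
        also have "(\<Prod>i\<in>{1..k'} - {m}. Lp_norm (p' i) (g' i)) = Q"
          unfolding Q_def by (rule prod.cong) (auto simp: g'_def)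
        finally show ?thesis by (simp add: r_def)
      qed
      have e2: "(\<Prod>i=1..k. Lp_norm (p i) (g i)) = Lp_norm t (g k) * (Lp_norm (2 * r) (g m) * Q)"
      proof -
        have "(\<Prod>i=1..k. Lp_norm (p i) (g i)) = Lp_norm (p k) (g k) * (\<Prod>i=1..k'. Lp_norm (p i) (g i))"
          unfolding Ik(1) by (rule prod.insert[OF _ Ik(2)]) simp
        also have "(\<Prod>i=1..k'. Lp_norm (p i) (g i)) = Lp_norm (p m) (g m) * (\<Prod>i\<in>{1..k'} - {m}. Lp_norm (p i) (g i))"
          by (rule prod.remove[OF _ mk']) simp
        also have "(\<Prod>i\<in>{1..k'} - {m}. Lp_norm (p i) (g i)) = Q"
          unfolding Q_def by (rule prod.cong) (auto simp: pi k_def)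
        finally show ?thesis using pk pm by simp
      qed
      have le: "Lp_norm r (g' m) \<le> Lp_norm (2 * r) (g m) * (ennreal CT * Lp_norm t (g k))"
      proof -
        have "Lp_norm r (g' m) = Lp_norm r (\<lambda>x. g m x * Tg K (g k) x)" by (simp add: g'_def)
        also have "\<dots> \<le> Lp_norm (2 * r) (g m) * Lp_norm (2 * r) (Tg K (g k))"
          by (rule holder_Lp[OF gm Tgm]) (use r1 in simp)
        also have "\<dots> \<le> Lp_norm (2 * r) (g m) * (ennreal CT * Lp_norm t (g k))"
          by (rule mult_left_mono) (use Tb gk in auto)
        finally show ?thesis .
      qed
      have P: "(\<Prod>i=1..k'. Lp_norm (p' i) (g' i)) \<le> ennreal CT * (\<Prod>i=1..k. Lp_norm (p i) (g i))"
      proof -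
        have "(\<Prod>i=1..k'. Lp_norm (p' i) (g' i)) \<le> (Lp_norm (2 * r) (g m) * (ennreal CT * Lp_norm t (g k))) * Q"
          unfolding e1 by (rule mult_right_mono[OF le]) simp
        also have "\<dots> = ennreal CT * (\<Prod>i=1..k. Lp_norm (p i) (g i))"
          unfolding e2 by (simp add: ac_simps)
        finally show ?thesis .
      qed
      have "Lp_norm q (W k E K g) = Lp_norm q (W k' E' K g')" by (simp add: WW)
      also have "\<dots> \<le> ennreal C' * (\<Prod>i=1..k'. Lp_norm (p' i) (g' i))" using bnd' g'm by blast
      also have "\<dots> \<le> ennreal C' * (ennreal CT * (\<Prod>i=1..k. Lp_norm (p i) (g i)))"
        by (rule mult_left_mono[OF P]) simp
      also have "\<dots> = ennreal (C' * CT) * (\<Prod>i=1..k. Lp_norm (p i) (g i))"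
        using C'pos CT by (simp add: ennreal_mult mult.assoc)
      finally show ?thesis .
    qed
    have "\<exists>p C. 0 < C \<and> (\<forall>i\<in>{1..k}. 1 \<le> p i) \<and> 1 / q \<le> (\<Sum>i=1..k. 1 / p i) \<and>
     (2 \<le> k \<longrightarrow> (\<forall>i\<in>{1..k}. 1 < p i) \<and> 1 / q < (\<Sum>i=1..k. 1 / p i)) \<and>
     (\<forall>g::nat \<Rightarrow> 'a \<Rightarrow> ennreal. (\<forall>i\<in>{1..k}. g i \<in> borel_measurable lborel) \<longrightarrow>
        Lp_norm q (W k E K g) \<le> ennreal C * (\<Prod>i=1..k. Lp_norm (p i) (g i)))"
    proof (intro exI[of _ p] exI[of _ "C' * CT"] conjI impI allI)
      show "0 < C' * CT" using C'pos CT by simp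
      show "\<forall>i\<in>{1..k}. 1 \<le> p i" using p_gt by (simp add: less_imp_le)
      show "1 / q \<le> (\<Sum>i=1..k. 1 / p i)" using sum_gt by simp
      show "\<forall>i\<in>{1..k}. 1 < p i" by (fact p_gt)
      show "1 / q < (\<Sum>i=1..k. 1 / p i)" by (fact sum_gt)
      fix g :: "nat \<Rightarrow> 'a \<Rightarrow> ennreal" assume "\<forall>i\<in>{1..k}. g i \<in> borel_measurable lborel"
      then show "Lp_norm q (W k E K g) \<le> ennreal (C' * CT) * (\<Prod>i=1..k. Lp_norm (p i) (g i))" by (rule bnd)
    qed
    then show ?thesis by (simp only: k_def)
  qed
qed

theorem mainTheorem2:
  fixes K :: "'a::euclidean_space \<Rightarrow> 'a \<Rightarrow> real"
    and n :: nat and E :: "nat set set"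
  assumes K_nonneg: "\<forall>x y. 0 \<le> K x y"
    and K_loc: "locally_integrable_kernel K"
    and K_impr: "univ_Lp_improving K"
    and n2: "n \<ge> 2"
    and tree: "is_tree n E"
    and labels: "\<forall>v w. rooted_child E v w \<longrightarrow> v < w"
  shows "\<forall>q::real. q \<ge> 1 \<longrightarrow>
    (\<exists>(p :: nat \<Rightarrow> real) (C :: real).
       (\<forall>i\<in>{1..n}. 1 < p i) \<and> (\<Sum>i=1..n. 1 / p i) > 1 / q \<and>
       (\<forall>f :: nat \<Rightarrow> 'a \<Rightarrow> real.
          (\<forall>i\<in>{1..n}. f i \<in> borel_measurable lborel \<and> (\<forall>x. 0 \<le> f i x)) \<longrightarrow>
          Lp_norm q (\<lambda>x. U_fun n E K f x * ennreal (f 1 x))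
            \<le> ennreal C * (\<Prod>i=1..n. Lp_norm (p i) (\<lambda>x. ennreal (f i x)))))"
proof (intro allI impI)
  fix q :: real assume q: "1 \<le> q"
  have Km: "(\<lambda>z. case z of (x, y) \<Rightarrow> K x y) \<in> borel_measurable (lborel \<Otimes>\<^sub>M lborel)"
    by (rule K_meas_pair[OF K_loc])
  have H: "Hgood n E" using tree labels unfolding is_tree_def Hgood_def by blast
  have n1: "1 \<le> n" using n2 by simp
  obtain p C where C: "0 < C" and pgt: "2 \<le> n \<longrightarrow> (\<forall>i\<in>{1..n}. 1 < p i) \<and> 1 / q < (\<Sum>i=1..n. 1 / p i)"
    and bnd: "\<forall>g. (\<forall>i\<in>{1..n}. g i \<in> borel_measurable lborel) \<longrightarrow>
        Lp_norm q (W n E K g) \<le> ennreal C * (\<Prod>i=1..n. Lp_norm (p i) (g i))"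
    using main_ind[OF K_nonneg Km K_impr q H n1] by blast
  show "\<exists>(p :: nat \<Rightarrow> real) (C :: real).
       (\<forall>i\<in>{1..n}. 1 < p i) \<and> (\<Sum>i=1..n. 1 / p i) > 1 / q \<and>
       (\<forall>f :: nat \<Rightarrow> 'a \<Rightarrow> real.
          (\<forall>i\<in>{1..n}. f i \<in> borel_measurable lborel \<and> (\<forall>x. 0 \<le> f i x)) \<longrightarrow>
          Lp_norm q (\<lambda>x. U_fun n E K f x * ennreal (f 1 x))
            \<le> ennreal C * (\<Prod>i=1..n. Lp_norm (p i) (\<lambda>x. ennreal (f i x))))"
  proof (intro exI[of _ p] exI[of _ C] conjI allI impI)
    show "\<forall>i\<in>{1..n}. 1 < p i" using pgt n2 by blast
    show "1 / q < (\<Sum>i=1..n. 1 / p i)" using pgt n2 by blast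
    fix f :: "nat \<Rightarrow> 'a \<Rightarrow> real"
    assume f: "\<forall>i\<in>{1..n}. f i \<in> borel_measurable lborel \<and> (\<forall>x. 0 \<le> f i x)"
    define g where "g = (\<lambda>i x. ennreal (f i x))"
    have gm: "\<forall>i\<in>{1..n}. g i \<in> borel_measurable lborel"
    proof
      fix i assume "i \<in> {1..n}"
      then have "f i \<in> borel_measurable lborel" using f by blast
      from measurable_compose[OF this measurable_ennreal]
      show "g i \<in> borel_measurable lborel" by (simp add: g_def)
    qed
    have eq: "(\<lambda>x. U_fun n E K f x * ennreal (f 1 x)) = W n E K g"
      by (rule ext) (simp add: U_fun_def W_def V_def Fint_def PE_def g_def Let_def)
    have "Lp_norm q (W n E K g) \<le> ennreal C * (\<Prod>i=1..n. Lp_norm (p i) (g i))"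
      using bnd gm by blast
    then show "Lp_norm q (\<lambda>x. U_fun n E K f x * ennreal (f 1 x))
            \<le> ennreal C * (\<Prod>i=1..n. Lp_norm (p i) (\<lambda>x. ennreal (f i x)))"
      unfolding eq by (simp add: g_def)
  qed
qed

end
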